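(* Let $(V,\sigma)$ be a complex symplectic vector space of dimension $2n+2$, let $Z\subset\mathbb{P}V$ be a Legendrian variety and let $z\in Z$ be a nonsingular point. Then (a) $\mathrm{Im}(\mathrm{II}_{Z,z})\subset D_z/T_zZ$; (b) $\mathrm{Im}(\mathrm{II}_{Z,z})=D_z/T_zZ$ if and only if $\mathrm{II}_{Z,z}$ is nondegenerate, i.e. its null space $\mathrm{Null}(\mathrm{II}_{Z,z})=\{v\in T_zZ:\mathrm{II}_{Z,z}(v,w)=0\text{ for all }w\in T_zZ\}$ is zero. Moreover, if there is a nonsingular point $z\in Z$ satisfying the equivalent conditions of (b), then (for this $z$): (c) the third fundamental form $\mathrm{III}_{Z,z}$ is, up to a nonzero scalar multiple, given by a single cubic form $f^z\in\mathrm{Sym}^3T_z^*Z$, which satisfies $f^z(\partial/\partial y^i,\partial/\partial y^j,\partial/\partial y^k)=\frac{\partial^3E(0)}{\partial y^i\partial y^j\partial y^k}$ for all $1\le i,j,k\le n$ in adapted coordinates as described in the context; (d) the second fundamental form $\mathrm{II}_{Z,z}$ is, up to a nonzero scalar multiple, given by the $n$-dimensional system of quadratic forms $\{f^z(v,\cdot,\cdot)\in\mathrm{Sym}^2T_z^*Z: v\in T_zZ\}$; that is, the span of the quadratic forms $\lambda\circ\mathrm{II}_{Z,z}$, $\lambda\in(D_z/T_zZ)^*$, equals this system; (e) $Z$ is linearly nondegenerate in $\mathbb{P}V$, i.e. not contained in any hyperplane.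
   Context: $D_z=\mathrm{Hom}(\widehat z,\widehat z^{\perp_\sigma}/\widehat z)\subset T_z\mathbb{P}V=\mathrm{Hom}(\widehat z,V/\widehat z)$ is the contact hyperplane at $z$, the kernel of the contact form $\theta$. $Z\subset\mathbb{P}V$ of dimension $n$ is Legendrian if $T_zZ\subset D_z$ at nonsingular points. $\mathrm{II}_{Z,z}\in\mathrm{Hom}(\mathrm{Sym}^2T_zZ,T_z\mathbb{P}V/T_zZ)$ and $\mathrm{III}_{Z,z}\in\mathrm{Hom}(\mathrm{Sym}^3T_zZ,T_z\mathbb{P}V/\mathrm{Im}\,\mathrm{II}_{Z,z})$ are the projective second and third fundamental forms (2-jets, resp. 3-jets, at $z$ of restrictions to $Z$ of linear forms vanishing to second, resp. third, order at $z$). Adapted coordinates: inhomogeneous coordinates $(x^1,\dots,x^{2n+1})$ on an affine open set of $\mathbb{P}V$ with $z$ the origin, $(x^{n+1}=\dots=x^{2n+1}=0)$ tangent to $Z$ at $z$, and $\theta$ proportional to $\sum_{k=1}^n(x^{n+k}dx^k-x^kdx^{n+k})-dx^{2n+1}$; near $z$, $Z$ is given by $x^k=y^k$, $x^{n+k}=F^k(y)$ ($1\le k\le n$), $x^{2n+1}=E(y)$, with $(y^1,\dots,y^n)$ local coordinates on $Z$ and $F^k,E$ holomorphic vanishing at $y=0$. *)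

theory Defs
  imports "HOL-Analysis.Analysis"
begin

text \<open>Points of the affine chart of P V are triples (a,b,c) with a = (x^1..x^n),
  b = (x^(n+1)..x^(2n)), c = x^(2n+1); the point z is the origin.
  Local coordinates on Z are y in C^n, and Z is the graph y |-> (y, F y, E y).\<close>

definition cdot :: "complex^'n::finite \<Rightarrow> complex^'n \<Rightarrow> complex" where
  "cdot a y = (\<Sum>k\<in>UNIV. a$k * y$k)"

definition cholo_on :: "(complex^'n::finite \<Rightarrow> complex) \<Rightarrow> (complex^'n) set \<Rightarrow> bool" where
  "cholo_on g U \<longleftrightarrow> open U \<and>
     (\<forall>y\<in>U. \<exists>D. (g has_derivative D) (at y) \<and> (\<forall>c v. D (c *s v) = c * D v))"

definition pd :: "'n::finite \<Rightarrow> (complex^'n \<Rightarrow> complex) \<Rightarrow> complex^'n \<Rightarrow> complex" where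
  "pd i g y = deriv (\<lambda>t. g (y + axis i t)) 0"

fun ipd :: "'n::finite list \<Rightarrow> (complex^'n \<Rightarrow> complex) \<Rightarrow> complex^'n \<Rightarrow> complex" where
  "ipd [] g = g"
| "ipd (i # is) g = pd i (ipd is g)"

text \<open>The contact form theta = sum_k (x^(n+k) dx^k - x^k dx^(n+k)) - dx^(2n+1)
  at the point x applied to the tangent vector xi.\<close>
definition contact_form ::
  "((complex^'n::finite) \<times> (complex^'n) \<times> complex) \<Rightarrow> ((complex^'n) \<times> (complex^'n) \<times> complex) \<Rightarrow> complex" where
  "contact_form x xi = (case x of (a, b, c) \<Rightarrow> case xi of (xa, xb, xc) \<Rightarrow>
       cdot b xa - cdot a xb - xc)"

definition dparam ::
  "(complex^'n::finite \<Rightarrow> complex^'n) \<Rightarrow> (complex^'n \<Rightarrow> complex) \<Rightarrow> complex^'n \<Rightarrow> complex^'n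
     \<Rightarrow> (complex^'n) \<times> (complex^'n) \<times> complex" where
  "dparam F E y v = (v, (\<chi> k. \<Sum>j\<in>UNIV. v$j * pd j (\<lambda>x. F x $ k) y),
                        \<Sum>j\<in>UNIV. v$j * pd j E y)"

definition adapted_legendrian ::
  "(complex^'n::finite \<Rightarrow> complex^'n) \<Rightarrow> (complex^'n \<Rightarrow> complex) \<Rightarrow> (complex^'n) set \<Rightarrow> bool" where
  "adapted_legendrian F E U \<longleftrightarrow>
     open U \<and> 0 \<in> U \<and> (\<forall>k. cholo_on (\<lambda>y. F y $ k) U) \<and> cholo_on E U \<and>
     F 0 = 0 \<and> E 0 = 0 \<and>
     (\<forall>j k. pd j (\<lambda>y. F y $ k) 0 = 0) \<and> (\<forall>j. pd j E 0 = 0) \<and>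
     (\<forall>y\<in>U. \<forall>v. contact_form (y, F y, E y) (dparam F E y v) = 0)"

text \<open>Normal space N = T_z PV / T_z Z, identified with C^n x C (coordinates x^(n+1)..x^(2n+1)),
  via the quotient map (a,b,c) |-> (b,c) (T_z Z = {(v,0,0)}).\<close>
definition quotT :: "(complex^'n::finite) \<times> (complex^'n) \<times> complex \<Rightarrow> (complex^'n) \<times> complex" where
  "quotT xi = (fst (snd xi), snd (snd xi))"

definition Dz :: "((complex^'n::finite) \<times> (complex^'n) \<times> complex) set" where
  "Dz = {xi. contact_form (0, 0, 0) xi = 0}"

definition DmodT :: "((complex^'n::finite) \<times> complex) set" where
  "DmodT = quotT ` Dz"

definition II ::
  "(complex^'n::finite \<Rightarrow> complex^'n) \<Rightarrow> (complex^'n \<Rightarrow> complex) \<Rightarrow> complex^'n \<Rightarrow> complex^'n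
     \<Rightarrow> (complex^'n) \<times> complex" where
  "II F E v w =
     ((\<chi> k. \<Sum>i\<in>UNIV. \<Sum>j\<in>UNIV. v$i * w$j * ipd [i, j] (\<lambda>y. F y $ k) 0),
      \<Sum>i\<in>UNIV. \<Sum>j\<in>UNIV. v$i * w$j * ipd [i, j] E 0)"

text \<open>Image of II (as a linear map on Sym^2 T_z Z).\<close>
definition ImII ::
  "(complex^'n::finite \<Rightarrow> complex^'n) \<Rightarrow> (complex^'n \<Rightarrow> complex) \<Rightarrow> ((complex^'n) \<times> complex) set" where
  "ImII F E = {(\<Sum>l<m. II F E (v l) (w l)) | (m::nat) v w. True}"

text \<open>Representative in N of III_{Z,z}(u,v,w); III is its class modulo Im II.\<close>
definition III ::
  "(complex^'n::finite \<Rightarrow> complex^'n) \<Rightarrow> (complex^'n \<Rightarrow> complex) \<Rightarrow> complex^'n \<Rightarrow> complex^'n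
     \<Rightarrow> complex^'n \<Rightarrow> (complex^'n) \<times> complex" where
  "III F E u v w =
     ((\<chi> k. \<Sum>i\<in>UNIV. \<Sum>j\<in>UNIV. \<Sum>l\<in>UNIV. u$i * v$j * w$l * ipd [i, j, l] (\<lambda>y. F y $ k) 0),
      \<Sum>i\<in>UNIV. \<Sum>j\<in>UNIV. \<Sum>l\<in>UNIV. u$i * v$j * w$l * ipd [i, j, l] E 0)"

definition fz :: "(complex^'n::finite \<Rightarrow> complex) \<Rightarrow> complex^'n \<Rightarrow> complex^'n \<Rightarrow> complex^'n \<Rightarrow> complex" where
  "fz E u v w = (\<Sum>i\<in>UNIV. \<Sum>j\<in>UNIV. \<Sum>l\<in>UNIV. u$i * v$j * w$l * ipd [i, j, l] E 0)"

definition nfun :: "complex^'n::finite \<Rightarrow> complex \<Rightarrow> (complex^'n) \<times> complex \<Rightarrow> complex" where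
  "nfun c c0 p = cdot c (fst p) + c0 * snd p"

end

theory Submission
  imports Defs "HOL-Complex_Analysis.Cauchy_Integral_Formula"
begin


lemma axis_scale: "t *s axis j 1 = axis j (t::complex)"
  by (simp add: vec_eq_iff axis_def)

definition dg :: "(complex^'n::finite \<Rightarrow> complex) \<Rightarrow> complex^'n \<Rightarrow> complex^'n \<Rightarrow> complex" where
  "dg g w h = (\<Sum>i\<in>UNIV. h$i * pd i g w)"

lemma homog_linear_eq:
  assumes "linear D" "\<forall>c v. D (c *s v) = (c::complex) * D v"
  shows "D h = (\<Sum>i\<in>UNIV. h$i * D (axis i 1))"
proof -
  have "D h = D (\<Sum>i\<in>UNIV. h$i *s axis i 1)" by (simp add: basis_expansion)
  also have "\<dots> = (\<Sum>i\<in>UNIV. D (h$i *s axis i 1))" by (rule linear_sum[OF assms(1)])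
  also have "\<dots> = (\<Sum>i\<in>UNIV. h$i * D (axis i 1))" using assms(2) by simp
  finally show ?thesis .
qed

lemma bl_scale: "bounded_linear (\<lambda>s::complex. s *s (h::complex^'n::finite))"
proof -
  have "linear (\<lambda>s::complex. s *s h)"
  proof (rule linearI)
    fix a b :: complex show "(a+b) *s h = a *s h + b *s h" by (simp add: vec_eq_iff algebra_simps)
  next
    fix r :: real and b :: complex show "(r *\<^sub>R b) *s h = r *\<^sub>R (b *s h)"
      by (simp add: vec_eq_iff)
  qed
  then show ?thesis by (simp add: linear_conv_bounded_linear)
qed

lemma scale_line_deriv: "((\<lambda>t. y + t *s h) has_derivative (\<lambda>s. s *s (h::complex^'n::finite))) (at t)"
proof -
  have d: "((\<lambda>t. t *s h) has_derivative (\<lambda>s. s *s h)) (at t)"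
    by (rule bounded_linear_imp_has_derivative[OF bl_scale])
  show ?thesis using has_derivative_add[OF has_derivative_const[of y] d] by simp
qed

lemma line_deriv_D:
  fixes g :: "complex^'n::finite \<Rightarrow> complex" and t :: complex
  assumes "(g has_derivative D) (at (y + t *s h))" "\<forall>c v. D (c *s v) = c * D v"
  shows "((\<lambda>t. g (y + t *s h)) has_field_derivative D h) (at t)"
proof -
  have e: "(\<lambda>x. x * D h) = (*) (D h)" by (auto simp: fun_eq_iff mult.commute)
  show ?thesis
  unfolding has_field_derivative_def
  using has_derivative_compose[OF scale_line_deriv assms(1)] assms(2) by (simp add: e)
qed

lemma dg_homog: "dg g w (c *s v) = c * dg g w v"
  by (simp add: dg_def sum_distrib_left algebra_simps)

lemma dg_add: "dg g w (u + v) = dg g w u + dg g w v"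
  by (simp add: dg_def sum.distrib algebra_simps)

lemma axis_zero[simp]: "axis j (0::'a::zero) = 0"
  by (simp add: vec_eq_iff axis_def)

lemma dg_axis: "dg g w (axis j 1) = pd j g w"
proof -
  have "dg g w (axis j 1) = (\<Sum>i\<in>UNIV. if i = j then pd i g w else 0)"
    unfolding dg_def by (rule sum.cong) (auto simp: axis_def)
  then show ?thesis by simp
qed

lemma cholo_has_deriv:
  assumes "cholo_on g U" "w \<in> U"
  shows "(g has_derivative dg g w) (at w)"
proof -
  obtain D where D: "(g has_derivative D) (at w)" "\<forall>c v. D (c *s v) = c * D v"
    using assms unfolding cholo_on_def by blast
  have pdD: "pd i g w = D (axis i 1)" for i
  proof -
    have "((\<lambda>t. g (w + t *s axis i 1)) has_field_derivative D (axis i 1)) (at 0)"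
      by (rule line_deriv_D) (use D in auto)
    then show ?thesis unfolding pd_def by (simp add: axis_scale DERIV_imp_deriv)
  qed
  have lin: "linear D" using D(1) has_derivative_bounded_linear bounded_linear.linear by blast
  have "D = dg g w"
    by (rule ext) (subst homog_linear_eq[OF lin D(2)], simp add: dg_def pdD)
  then show ?thesis using D by simp
qed

lemma cholo_line:
  assumes "cholo_on g U" "y + t *s h \<in> U"
  shows "((\<lambda>t. g (y + t *s h)) has_field_derivative dg g (y + t *s h) h) (at t)"
  by (rule line_deriv_D[OF cholo_has_deriv[OF assms]]) (simp add: dg_homog)

lemma cholo_axis_line:
  assumes "cholo_on g U" "y + axis j t \<in> U"
  shows "((\<lambda>t. g (y + axis j t)) has_field_derivative pd j g (y + axis j t)) (at t)"
  using cholo_line[OF assms(1), of y t "axis j 1"] assms(2) by (simp add: axis_scale dg_axis)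

lemma cholo_pd_eq:
  assumes "cholo_on g U" "y \<in> U"
  shows "((\<lambda>t. g (y + axis j t)) has_field_derivative pd j g y) (at 0)"
  using cholo_axis_line[OF assms(1), of y j 0] assms(2) by simp

lemma cholo_cont: "cholo_on g U \<Longrightarrow> continuous_on U g"
  by (intro continuous_at_imp_continuous_on ballI has_derivative_continuous[OF cholo_has_deriv])

lemma norm_scale_vec: "norm (c *s (h::complex^'n::finite)) = norm c * norm h"
  unfolding norm_vec_def by (simp add: L2_set_right_distrib norm_mult)

lemma taylor2_bound:
  fixes \<phi> :: "complex \<Rightarrow> complex"
  assumes cont: "continuous_on (cball 0 \<rho>) \<phi>" and hol: "\<phi> holomorphic_on ball 0 \<rho>"
    and rho: "\<rho> \<ge> 2" and M: "\<And>u. norm u = \<rho> \<Longrightarrow> norm (\<phi> u) \<le> M"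
  shows "norm (\<phi> 1 - \<phi> 0 - deriv \<phi> 0) \<le> 2 * M / \<rho>^2"
proof -
  have M0: "0 \<le> M" using M[of "of_real \<rho>"] rho by (auto intro: order_trans[OF norm_ge_zero])
  have i1: "((\<lambda>u. \<phi> u / (u - 1)) has_contour_integral (2 * of_real pi * \<i> * \<phi> 1)) (circlepath 0 \<rho>)"
    by (rule Cauchy_integral_circlepath[OF cont hol]) (use rho in simp)
  have i0: "((\<lambda>u. \<phi> u / (u - 0)) has_contour_integral (2 * of_real pi * \<i> * \<phi> 0)) (circlepath 0 \<rho>)"
    by (rule Cauchy_integral_circlepath[OF cont hol]) (use rho in simp)
  have i2: "((\<lambda>u. \<phi> u / (u - 0) ^ Suc 1) has_contour_integral ((2 * pi * \<i>) / (fact 1) * (deriv ^^ 1) \<phi> 0)) (circlepath 0 \<rho>)"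
    by (rule Cauchy_has_contour_integral_higher_derivative_circlepath[OF cont hol]) (use rho in simp)
  have i: "((\<lambda>u. \<phi> u / (u - 1) - \<phi> u / (u - 0) - \<phi> u / (u - 0) ^ Suc 1) has_contour_integral
      (2 * of_real pi * \<i> * (\<phi> 1 - \<phi> 0 - deriv \<phi> 0))) (circlepath 0 \<rho>)"
    using has_contour_integral_diff[OF has_contour_integral_diff[OF i1 i0] i2]
    by (simp add: algebra_simps)
  have bnd: "norm (\<phi> u / (u - 1) - \<phi> u / (u - 0) - \<phi> u / (u - 0) ^ Suc 1) \<le> 2 * M / \<rho>^3"
    if u: "norm (u - 0) = \<rho>" for u
  proof -
    have u0: "u \<noteq> 0" "u \<noteq> 1" using u rho by auto
    have "\<phi> u / (u - 1) - \<phi> u / (u - 0) - \<phi> u / (u - 0) ^ Suc 1 = \<phi> u / (u^2 * (u - 1))"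
      using u0 by (simp add: field_simps power2_eq_square)
    also have "norm \<dots> = norm (\<phi> u) / (\<rho>^2 * norm (u - 1))"
      using u by (simp add: norm_divide norm_mult norm_power)
    also have "\<dots> \<le> M / (\<rho>^2 * (\<rho> / 2))"
    proof (rule frac_le)
      show "0 \<le> M" by (rule M0)
      show "norm (\<phi> u) \<le> M" using M u by simp
      show "0 < \<rho>^2 * (\<rho> / 2)" using rho by simp
      have "norm u - norm (1::complex) \<le> norm (u - 1)" by (rule norm_triangle_ineq2)
      then show "\<rho>^2 * (\<rho> / 2) \<le> \<rho>^2 * norm (u - 1)" using u rho
        by (intro mult_left_mono) auto
    qed
    also have "\<dots> = 2 * M / \<rho>^3" by (simp add: power3_eq_cube power2_eq_square)
    finally show ?thesis .
  qed
  have "norm (2 * of_real pi * \<i> * (\<phi> 1 - \<phi> 0 - deriv \<phi> 0)) \<le> 2 * M / \<rho>^3 * (2 * pi * \<rho>)"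
    by (rule has_contour_integral_bound_circlepath[OF i]) (use M0 rho bnd in auto)
  moreover have "norm (2 * of_real pi * \<i> * (\<phi> 1 - \<phi> 0 - deriv \<phi> 0)) = 2 * pi * norm (\<phi> 1 - \<phi> 0 - deriv \<phi> 0)"
    by (simp add: norm_mult)
  moreover have "2 * M / \<rho>^3 * (2 * pi * \<rho>) = 2 * pi * (2 * M / \<rho>^2)"
    using rho by (simp add: power3_eq_cube power2_eq_square field_simps)
  ultimately have "2 * pi * norm (\<phi> 1 - \<phi> 0 - deriv \<phi> 0) \<le> 2 * pi * (2 * M / \<rho>^2)"
    by linarith
  then show ?thesis using pi_gt_zero by (simp only: mult_le_cancel_left_pos[of "2*pi"])
qed

lemma dg_zero[simp]: "dg g w 0 = 0"
  by (simp add: dg_def)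

lemma quad_est:
  fixes g :: "complex^'n::finite \<Rightarrow> complex"
  assumes g: "cholo_on g U" and y0: "y0 \<in> U"
  shows "\<exists>r>0. \<exists>C\<ge>0. \<forall>y\<in>ball y0 r. \<forall>h. norm h < r \<longrightarrow>
           norm (g (y + h) - g y - dg g y h) \<le> C * (norm h)^2"
proof -
  have oU: "open U" using g by (simp add: cholo_on_def)
  obtain e where e: "e > 0" "cball y0 e \<subseteq> U" using open_contains_cball oU y0 by blast
  define R where "R = e / 4"
  have R: "R > 0" "cball y0 (4 * R) \<subseteq> U" using e by (auto simp: R_def)
  have "continuous_on (cball y0 (4 * R)) g"
    using continuous_on_subset[OF cholo_cont[OF g] R(2)] .
  then have "compact (g ` cball y0 (4 * R))" by (simp add: compact_continuous_image)
  then have "bounded (g ` cball y0 (4 * R))" by (rule compact_imp_bounded)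
  then obtain M where M0: "\<forall>z\<in>g ` cball y0 (4 * R). norm z \<le> M" by (auto simp: bounded_iff)
  have M: "\<And>x. x \<in> cball y0 (4 * R) \<Longrightarrow> norm (g x) \<le> M" using M0 by auto
  have M0: "0 \<le> M" using M[of y0] R by (auto intro: order_trans[OF norm_ge_zero])
  have C0: "0 \<le> M / (2 * R^2)" using R M0 by auto
  have "\<forall>y\<in>ball y0 R. \<forall>h. norm h < R \<longrightarrow>
           norm (g (y + h) - g y - dg g y h) \<le> M / (2 * R^2) * (norm h)^2"
  proof (intro ballI allI impI)
    fix y h :: "complex^'n" assume y: "y \<in> ball y0 R" and h: "norm h < R"
    show "norm (g (y + h) - g y - dg g y h) \<le> M / (2 * R^2) * (norm h)^2"
    proof (cases "h = 0")
      case True then show ?thesis by simp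
    next
      case False
      then have hpos: "norm h > 0" by simp
      define \<rho> where "\<rho> = 2 * R / norm h"
      have rho: "\<rho> \<ge> 2" using h hpos R by (simp add: \<rho>_def field_simps)
      define \<phi> where "\<phi> = (\<lambda>t. g (y + t *s h))"
      have inU: "y + t *s h \<in> cball y0 (4 * R)" if "norm t \<le> \<rho>" for t
      proof -
        have "norm (t *s h) \<le> \<rho> * norm h" using that hpos by (simp add: norm_scale_vec mult_right_mono)
        also have "\<dots> = 2 * R" using hpos by (simp add: \<rho>_def)
        finally have n2: "norm (t *s h) \<le> 2 * R" .
        have "dist y0 (y + t *s h) \<le> dist y0 y + norm (t *s h)"
          by (metis add_diff_cancel_left' dist_norm dist_triangle2 norm_minus_commute) 
        then show ?thesis using y n2 R(1) by (simp add: dist_commute)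
      qed
      have der: "(\<phi> has_field_derivative dg g (y + t *s h) h) (at t)" if "norm t \<le> \<rho>" for t
        unfolding \<phi>_def by (rule cholo_line[OF g]) (use inU[OF that] R(2) in blast)
      have cont: "continuous_on (cball 0 \<rho>) \<phi>"
      proof (intro continuous_at_imp_continuous_on ballI)
        fix t :: complex assume "t \<in> cball 0 \<rho>"
        then have "norm t \<le> \<rho>" by simp
        then show "isCont \<phi> t" by (rule DERIV_isCont[OF der])
      qed
      have hol: "\<phi> holomorphic_on ball 0 \<rho>"
        unfolding holomorphic_on_def field_differentiable_def
      proof
        fix t :: complex assume "t \<in> ball 0 \<rho>"
        then have "norm t \<le> \<rho>" by simp
        then show "\<exists>f'. (\<phi> has_field_derivative f') (at t within ball 0 \<rho>)"
          using has_field_derivative_at_within[OF der] by blast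
      qed
      have "norm (\<phi> 1 - \<phi> 0 - deriv \<phi> 0) \<le> 2 * M / \<rho>^2"
      proof (rule taylor2_bound[OF cont hol rho])
        fix u :: complex assume "norm u = \<rho>"
        then show "norm (\<phi> u) \<le> M" unfolding \<phi>_def by (intro M inU) simp
      qed
      moreover have "deriv \<phi> 0 = dg g y h" using DERIV_imp_deriv[OF der[of 0]] rho by simp
      moreover have "2 * M / \<rho>^2 = M / (2 * R^2) * (norm h)^2"
        using hpos R by (simp add: \<rho>_def field_simps power2_eq_square)
      ultimately show ?thesis by (simp add: \<phi>_def)
    qed
  qed
  then show ?thesis using R(1) C0 by blast
qed

lemma norm_axis_c: "norm (axis j (t::complex)) = norm t"
  by (simp add: norm_eq_sqrt_inner inner_axis_axis)

lemma lip_pd: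
  fixes g :: "complex^'n::finite \<Rightarrow> complex"
  assumes est: "\<forall>y\<in>ball y1 r. \<forall>h. norm h < r \<longrightarrow> norm (g (y + h) - g y - dg g y h) \<le> C * (norm h)^2"
    and d: "norm d < r / 2" and C: "C \<ge> 0"
  shows "norm (pd i g (y1 + d) - pd i g y1) \<le> 6 * C * norm d"
proof (cases "d = 0")
  case True then show ?thesis by simp
next
  case False
  then have dpos: "norm d > 0" by simp
  define u where "u = of_real (norm d) *s axis i (1::complex)"
  have nu: "norm u = norm d" by (simp add: u_def norm_scale_vec norm_axis_c)
  have ndu: "norm (d + u) \<le> 2 * norm d" using norm_triangle_ineq[of d u] nu by simp
  have r: "r > 0" using d dpos by linarith
  have y1: "y1 \<in> ball y1 r" using r by simp
  have ndr: "norm d < r" "2 * norm d < r" using d norm_ge_zero[of d] by linarith+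
  have y1d: "y1 + d \<in> ball y1 r" using ndr by (simp add: dist_norm)
  have e1: "norm (g (y1 + (d + u)) - g y1 - dg g y1 (d + u)) \<le> C * (norm (d + u))^2"
    using est y1 ndu ndr by auto
  have e2: "norm (g (y1 + d) - g y1 - dg g y1 d) \<le> C * (norm d)^2"
    using est y1 ndr by auto
  have e3: "norm (g (y1 + d + u) - g (y1 + d) - dg g (y1 + d) u) \<le> C * (norm u)^2"
    using est y1d nu ndr by (metis (no_types, lifting))
  have idt: "dg g (y1 + d) u - dg g y1 u =
      (g (y1 + (d + u)) - g y1 - dg g y1 (d + u)) - (g (y1 + d) - g y1 - dg g y1 d)
       - (g (y1 + d + u) - g (y1 + d) - dg g (y1 + d) u)"
    by (simp add: dg_add algebra_simps)
  have "norm (dg g (y1 + d) u - dg g y1 u) \<le> C * (norm (d + u))^2 + C * (norm d)^2 + C * (norm u)^2"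
    unfolding idt using e1 e2 e3 norm_triangle_ineq4 norm_triangle_ineq4
    by (smt (verit) norm_diff_ineq norm_triangle_ineq4)
  also have "\<dots> \<le> C * (2 * norm d)^2 + C * (norm d)^2 + C * (norm d)^2"
    using ndu C nu by (intro add_mono mult_left_mono power_mono) auto
  also have "\<dots> = norm d * (6 * C * norm d)" by (simp add: power2_eq_square algebra_simps)
  finally have A: "norm (dg g (y1 + d) u - dg g y1 u) \<le> norm d * (6 * C * norm d)" .
  have "dg g (y1 + d) u - dg g y1 u = of_real (norm d) * (pd i g (y1 + d) - pd i g y1)"
    by (simp add: u_def dg_homog dg_axis algebra_simps)
  then have "norm (dg g (y1 + d) u - dg g y1 u) = norm d * norm (pd i g (y1 + d) - pd i g y1)"
    by (simp add: norm_mult)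
  then show ?thesis using A dpos by simp
qed

lemma pd_cont:
  fixes g :: "complex^'n::finite \<Rightarrow> complex"
  assumes g: "cholo_on g U"
  shows "continuous_on U (pd i g)"
proof (intro continuous_at_imp_continuous_on ballI)
  fix y1 assume y1: "y1 \<in> U"
  obtain r C where rC: "r > 0" "C \<ge> 0"
    "\<forall>y\<in>ball y1 r. \<forall>h. norm h < r \<longrightarrow> norm (g (y + h) - g y - dg g y h) \<le> C * (norm h)^2"
    using quad_est[OF g y1] by blast
  show "isCont (pd i g) y1"
    unfolding continuous_at_eps_delta
  proof (intro allI impI)
    fix e :: real assume e: "e > 0"
    define \<delta> where "\<delta> = min (r / 2) (e / (6 * C + 1))"
    have dpos: "\<delta> > 0" using rC e by (simp add: \<delta>_def)
    have "dist (pd i g x') (pd i g y1) < e" if "dist x' y1 < \<delta>" for x'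
    proof -
      define d where "d = x' - y1"
      have nd: "norm d < r / 2" "norm d < e / (6 * C + 1)" using that by (auto simp: d_def dist_norm \<delta>_def)
      have "norm (pd i g (y1 + d) - pd i g y1) \<le> 6 * C * norm d"
        by (rule lip_pd[OF rC(3) nd(1) rC(2)])
      also have "\<dots> \<le> (6 * C + 1) * norm d" by (simp add: algebra_simps)
      also have "\<dots> < e" using nd(2) rC(2) by (simp add: field_simps)
      finally show ?thesis by (simp add: d_def dist_norm)
    qed
    then show "\<exists>\<delta>>0. \<forall>x'. dist x' y1 < \<delta> \<longrightarrow> dist (pd i g x') (pd i g y1) < e"
      using dpos by blast
  qed
qed

lemma bl_coef: "bounded_linear (\<lambda>h::complex^'n::finite. \<Sum>i\<in>UNIV. h$i * c i)"
  by (intro bounded_linear_sum bounded_linear_mult_const bounded_linear_vec_nth)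

lemma quad_imp_deriv:
  fixes f :: "complex^'n::finite \<Rightarrow> complex"
  assumes L: "bounded_linear L" and d: "\<delta> > 0" and K: "K \<ge> 0"
    and est: "\<And>h. norm h < \<delta> \<Longrightarrow> norm (f (y + h) - f y - L h) \<le> K * (norm h)^2"
  shows "(f has_derivative L) (at y)"
  unfolding has_derivative_at_alt
proof (intro conjI L allI impI)
  fix e :: real assume e: "e > 0"
  define d' where "d' = min \<delta> (e / (K + 1))"
  have "d' > 0" using d e K by (simp add: d'_def)
  moreover have "norm (f y' - f y - L (y' - y)) \<le> e * norm (y' - y)" if "norm (y' - y) < d'" for y'
  proof -
    define h where "h = y' - y"
    have h: "norm h < \<delta>" "norm h < e / (K + 1)" using that by (auto simp: h_def d'_def)
    have "norm (f (y + h) - f y - L h) \<le> K * (norm h)^2" by (rule est[OF h(1)])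
    also have "\<dots> \<le> (K + 1) * norm h * norm h" by (simp add: power2_eq_square algebra_simps)
    also have "\<dots> \<le> e * norm h"
    proof -
      have "(K + 1) * norm h \<le> e" using h(2) K by (simp add: field_simps)
      then show ?thesis by (intro mult_right_mono) auto
    qed
    finally show ?thesis by (simp add: h_def)
  qed
  ultimately show "\<exists>d>0. \<forall>y'. norm (y' - y) < d \<longrightarrow> norm (f y' - f y - L (y' - y)) \<le> e * norm (y' - y)"
    by blast
qed

lemma cauchy_pd:
  fixes g :: "complex^'n::finite \<Rightarrow> complex"
  assumes g: "cholo_on g U" and rho: "\<rho> > 0" and inU: "\<And>\<zeta>. norm \<zeta> \<le> \<rho> \<Longrightarrow> p + axis j \<zeta> \<in> U"
  shows "((\<lambda>\<zeta>. g (p + axis j \<zeta>) / (\<zeta> - 0)^2) has_contour_integral (2 * pi * \<i> * pd j g p)) (circlepath 0 \<rho>)"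
proof -
  define f where "f = (\<lambda>\<zeta>. g (p + axis j \<zeta>))"
  have der: "(f has_field_derivative pd j g (p + axis j t)) (at t)" if "norm t \<le> \<rho>" for t
    unfolding f_def by (rule cholo_axis_line[OF g inU[OF that]])
  have cont: "continuous_on (cball 0 \<rho>) f"
  proof (intro continuous_at_imp_continuous_on ballI)
    fix t :: complex assume "t \<in> cball 0 \<rho>"
    then have "norm t \<le> \<rho>" by simp
    then show "isCont f t" by (rule DERIV_isCont[OF der])
  qed
  have hol: "f holomorphic_on ball 0 \<rho>"
    unfolding holomorphic_on_def field_differentiable_def
  proof
    fix t :: complex assume "t \<in> ball 0 \<rho>"
    then have "norm t \<le> \<rho>" by simp
    then show "\<exists>f'. (f has_field_derivative f') (at t within ball 0 \<rho>)"
      using has_field_derivative_at_within[OF der] by blast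
  qed
  have "((\<lambda>u. f u / (u - 0) ^ Suc 1) has_contour_integral ((2 * pi * \<i>) / (fact 1) * (deriv ^^ 1) f 0)) (circlepath 0 \<rho>)"
    by (rule Cauchy_has_contour_integral_higher_derivative_circlepath[OF cont hol]) (use rho in simp)
  moreover have "deriv f 0 = pd j g p" using DERIV_imp_deriv[OF der[of 0]] rho by simp
  ultimately show ?thesis by (simp add: f_def numeral_2_eq_2)
qed

lemma cont_axis_line: "continuous_on S (\<lambda>\<zeta>. y + axis j (\<zeta>::complex))"
proof -
  have "continuous_on S (\<lambda>\<zeta>. y + \<zeta> *s axis j (1::complex))"
    by (intro continuous_at_imp_continuous_on ballI has_derivative_continuous[OF scale_line_deriv])
  then show ?thesis by (simp add: axis_scale)
qed

lemma pd_hasderiv: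
  fixes g :: "complex^'n::finite \<Rightarrow> complex"
  assumes g: "cholo_on g U" and y: "y \<in> U"
  shows "\<exists>\<rho>>0. (\<forall>\<zeta>. norm \<zeta> \<le> \<rho> \<longrightarrow> y + axis j \<zeta> \<in> U) \<and>
     (pd j g has_derivative (\<lambda>h. \<Sum>i\<in>UNIV. h$i *
        (contour_integral (circlepath 0 \<rho>) (\<lambda>\<zeta>. pd i g (y + axis j \<zeta>) / (\<zeta> - 0)^2) / (2 * pi * \<i>)))) (at y)"
proof -
  obtain r C where rC: "r > 0" "C \<ge> 0"
    "\<forall>w\<in>ball y r. \<forall>h. norm h < r \<longrightarrow> norm (g (w + h) - g w - dg g w h) \<le> C * (norm h)^2"
    using quad_est[OF g y] by blast
  have oU: "open U" using g by (simp add: cholo_on_def)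
  obtain e where e: "e > 0" "cball y e \<subseteq> U" using open_contains_cball oU y by blast
  define \<rho> where "\<rho> = min (r / 2) (e / 2)"
  have rho: "\<rho> > 0" "\<rho> \<le> r / 2" "\<rho> \<le> e / 2" using rC e by (auto simp: \<rho>_def)
  have inU: "p + axis j \<zeta> \<in> U" if "norm (p - y) < \<rho>" "norm \<zeta> \<le> \<rho>" for p \<zeta>
  proof -
    have "dist y (p + axis j \<zeta>) \<le> norm (p - y) + norm (axis j \<zeta>)"
      by (metis dist_norm norm_minus_commute norm_triangle_ineq4 add_diff_eq diff_add_eq add.commute
          order_trans norm_triangle_ineq diff_diff_eq2)
    also have "\<dots> < e" using that rho by (simp add: norm_axis_c)
    finally show ?thesis using e(2) by auto
  qed
  define I where "I i = contour_integral (circlepath 0 \<rho>) (\<lambda>\<zeta>. pd i g (y + axis j \<zeta>) / (\<zeta> - 0)^2)" for i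
  have hasI: "((\<lambda>\<zeta>. pd i g (y + axis j \<zeta>) / (\<zeta> - 0)^2) has_contour_integral I i) (circlepath 0 \<rho>)" for i
    unfolding I_def
  proof (intro has_contour_integral_integral contour_integrable_continuous_circlepath)
    have sub: "(\<lambda>\<zeta>. y + axis j \<zeta>) ` path_image (circlepath 0 \<rho>) \<subseteq> U"
      using inU[of y] rho by auto
    show "continuous_on (path_image (circlepath 0 \<rho>)) (\<lambda>\<zeta>. pd i g (y + axis j \<zeta>) / (\<zeta> - 0)^2)"
      by (intro continuous_on_divide continuous_on_compose2[OF pd_cont[OF g] cont_axis_line sub]
          continuous_intros) (use rho in auto)
  qed
  define L where "L h = (\<Sum>i\<in>UNIV. h$i * (I i / (2 * pi * \<i>)))" for h :: "complex^'n"
  have "(pd j g has_derivative L) (at y)"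
  proof (rule quad_imp_deriv[OF _ rho(1), of _ "C / \<rho>"])
    show "bounded_linear L" unfolding L_def by (rule bl_coef)
    show "0 \<le> C / \<rho>" using rC rho by simp
    fix h :: "complex^'n" assume h: "norm h < \<rho>"
    have cy: "((\<lambda>\<zeta>. g (y + axis j \<zeta>) / (\<zeta> - 0)^2) has_contour_integral (2 * pi * \<i> * pd j g y)) (circlepath 0 \<rho>)"
      by (rule cauchy_pd[OF g rho(1)]) (use inU[of y] rho in auto)
    have ch: "((\<lambda>\<zeta>. g (y + h + axis j \<zeta>) / (\<zeta> - 0)^2) has_contour_integral (2 * pi * \<i> * pd j g (y + h))) (circlepath 0 \<rho>)"
      by (rule cauchy_pd[OF g rho(1)]) (use inU[of "y + h"] h in auto)
    have hs: "((\<lambda>\<zeta>. \<Sum>i\<in>UNIV. h$i * (pd i g (y + axis j \<zeta>) / (\<zeta> - 0)^2)) has_contour_integral (\<Sum>i\<in>UNIV. h$i * I i)) (circlepath 0 \<rho>)"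
      by (intro has_contour_integral_sum has_contour_integral_lmul hasI) auto
    have tot: "((\<lambda>\<zeta>. (g (y + axis j \<zeta> + h) - g (y + axis j \<zeta>) - dg g (y + axis j \<zeta>) h) / (\<zeta> - 0)^2)
        has_contour_integral (2 * pi * \<i> * pd j g (y + h) - 2 * pi * \<i> * pd j g y - (\<Sum>i\<in>UNIV. h$i * I i))) (circlepath 0 \<rho>)"
      using has_contour_integral_diff[OF has_contour_integral_diff[OF ch cy] hs]
      by (simp add: diff_divide_distrib dg_def sum_divide_distrib add_ac)
    have "norm (2 * pi * \<i> * pd j g (y + h) - 2 * pi * \<i> * pd j g y - (\<Sum>i\<in>UNIV. h$i * I i))
          \<le> C * (norm h)^2 / \<rho>^2 * (2 * pi * \<rho>)"
    proof (rule has_contour_integral_bound_circlepath[OF tot])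
      show "0 \<le> C * (norm h)^2 / \<rho>^2" using rC by simp
      show "0 < \<rho>" by (rule rho)
      fix \<zeta> :: complex assume z: "norm (\<zeta> - 0) = \<rho>"
      have w: "y + axis j \<zeta> \<in> ball y r" using z rho rC by (simp add: dist_norm norm_axis_c)
      have hr: "norm h < r" using h rho by simp
      have "norm (g (y + axis j \<zeta> + h) - g (y + axis j \<zeta>) - dg g (y + axis j \<zeta>) h) \<le> C * (norm h)^2"
        using rC(3) w hr by blast
      then show "norm ((g (y + axis j \<zeta> + h) - g (y + axis j \<zeta>) - dg g (y + axis j \<zeta>) h) / (\<zeta> - 0)^2)
          \<le> C * (norm h)^2 / \<rho>^2"
        using z by (simp add: norm_divide norm_power divide_right_mono)
    qed
    moreover have "2 * pi * \<i> * pd j g (y + h) - 2 * pi * \<i> * pd j g y - (\<Sum>i\<in>UNIV. h$i * I i)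
        = (2 * pi * \<i>) * (pd j g (y + h) - pd j g y - L h)"
      by (simp add: L_def algebra_simps sum_distrib_left)
    moreover have "norm ((2 * pi * \<i>) * (pd j g (y + h) - pd j g y - L h)) = 2 * pi * norm (pd j g (y + h) - pd j g y - L h)"
      by (simp add: norm_mult)
    moreover have "C * (norm h)^2 / \<rho>^2 * (2 * pi * \<rho>) = 2 * pi * (C / \<rho> * (norm h)^2)"
      using rho by (simp add: power2_eq_square field_simps)
    ultimately have "2 * pi * norm (pd j g (y + h) - pd j g y - L h) \<le> 2 * pi * (C / \<rho> * (norm h)^2)"
      by simp
    then show "norm (pd j g (y + h) - pd j g y - L h) \<le> C / \<rho> * (norm h)^2"
      using pi_gt_zero by (simp only: mult_le_cancel_left_pos[of "2*pi"])
  qed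
  then show ?thesis using rho(1) inU[of y] unfolding L_def I_def by auto
qed

lemma sum_axis_coef: "(\<Sum>k\<in>UNIV. (axis i (1::complex))$k * c k) = c i"
proof -
  have "(\<Sum>k\<in>UNIV. (axis i (1::complex))$k * c k) = (\<Sum>k\<in>UNIV. if k = i then c k else 0)"
    by (rule sum.cong) (auto simp: axis_def)
  then show ?thesis by simp
qed

lemma cholo_pd:
  fixes g :: "complex^'n::finite \<Rightarrow> complex"
  assumes g: "cholo_on g U"
  shows "cholo_on (pd j g) U"
  unfolding cholo_on_def
proof (intro conjI ballI)
  show "open U" using g by (simp add: cholo_on_def)
  fix y assume y: "y \<in> U"
  from pd_hasderiv[OF g y, of j] obtain \<rho> where
    "(pd j g has_derivative (\<lambda>h. \<Sum>i\<in>UNIV. h$i *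
        (contour_integral (circlepath 0 \<rho>) (\<lambda>\<zeta>. pd i g (y + axis j \<zeta>) / (\<zeta> - 0)^2) / (2 * pi * \<i>)))) (at y)"
    by blast
  moreover define k where "k i = contour_integral (circlepath 0 \<rho>) (\<lambda>\<zeta>. pd i g (y + axis j \<zeta>) / (\<zeta> - 0)^2) / (2 * pi * \<i>)" for i
  ultimately have d: "(pd j g has_derivative (\<lambda>h. \<Sum>i\<in>UNIV. h$i * k i)) (at y)" by simp
  have "\<forall>c v. (\<lambda>h. \<Sum>i\<in>UNIV. h$i * k i) (c *s v) = c * (\<lambda>h. \<Sum>i\<in>UNIV. h$i * k i) v"
    by (simp add: sum_distrib_left algebra_simps)
  with d show "\<exists>D. (pd j g has_derivative D) (at y) \<and> (\<forall>c v. D (c *s v) = c * D v)"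
    by blast
qed

lemma pd_sym:
  fixes g :: "complex^'n::finite \<Rightarrow> complex"
  assumes g: "cholo_on g U" and y: "y \<in> U"
  shows "pd i (pd j g) y = pd j (pd i g) y"
proof -
  from pd_hasderiv[OF g y, of j] obtain \<rho> where rho: "\<rho> > 0" "\<forall>\<zeta>. norm \<zeta> \<le> \<rho> \<longrightarrow> y + axis j \<zeta> \<in> U" and
    D: "(pd j g has_derivative (\<lambda>h. \<Sum>k\<in>UNIV. h$k *
        (contour_integral (circlepath 0 \<rho>) (\<lambda>\<zeta>. pd k g (y + axis j \<zeta>) / (\<zeta> - 0)^2) / (2 * pi * \<i>)))) (at y)"
    by blast
  have D2: "(pd j g has_derivative dg (pd j g) y) (at y)"
    by (rule cholo_has_deriv[OF cholo_pd[OF g] y])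
  have eq: "dg (pd j g) y = (\<lambda>h. \<Sum>k\<in>UNIV. h$k *
        (contour_integral (circlepath 0 \<rho>) (\<lambda>\<zeta>. pd k g (y + axis j \<zeta>) / (\<zeta> - 0)^2) / (2 * pi * \<i>)))"
    by (rule has_derivative_unique[OF D2 D])
  have "pd i (pd j g) y = dg (pd j g) y (axis i 1)" by (simp add: dg_axis)
  also have "\<dots> = contour_integral (circlepath 0 \<rho>) (\<lambda>\<zeta>. pd i g (y + axis j \<zeta>) / (\<zeta> - 0)^2) / (2 * pi * \<i>)"
    unfolding eq by (rule sum_axis_coef)
  also have "contour_integral (circlepath 0 \<rho>) (\<lambda>\<zeta>. pd i g (y + axis j \<zeta>) / (\<zeta> - 0)^2) = 2 * pi * \<i> * pd j (pd i g) y"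
    by (rule contour_integral_unique[OF cauchy_pd[OF cholo_pd[OF g] rho(1)]]) (use rho(2) in auto)
  finally show ?thesis by simp
qed

definition HP :: "'n::finite \<Rightarrow> (complex^'n \<Rightarrow> complex) \<Rightarrow> complex^'n \<Rightarrow> complex \<Rightarrow> bool" where
  "HP i f y d \<longleftrightarrow> ((\<lambda>t. f (y + axis i t)) has_field_derivative d) (at 0)"

lemma HP_pd: "HP i f y d \<Longrightarrow> pd i f y = d"
  unfolding HP_def pd_def by (rule DERIV_imp_deriv)

lemma HP_cholo: "cholo_on f U \<Longrightarrow> y \<in> U \<Longrightarrow> HP i f y (pd i f y)"
  unfolding HP_def by (rule cholo_pd_eq)

lemma HP_const: "HP i (\<lambda>y. c) y 0"
  unfolding HP_def by simp

lemma HP_add: "HP i f y a \<Longrightarrow> HP i h y b \<Longrightarrow> HP i (\<lambda>y. f y + h y) y (a + b)"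
  unfolding HP_def by (rule DERIV_add)

lemma HP_diff: "HP i f y a \<Longrightarrow> HP i h y b \<Longrightarrow> HP i (\<lambda>y. f y - h y) y (a - b)"
  unfolding HP_def by (rule DERIV_diff)

lemma HP_minus: "HP i f y a \<Longrightarrow> HP i (\<lambda>y. - f y) y (- a)"
  unfolding HP_def by (rule DERIV_minus)

lemma HP_cmult: "HP i f y a \<Longrightarrow> HP i (\<lambda>y. c * f y) y (c * a)"
  unfolding HP_def by (rule DERIV_cmult)

lemma HP_sum: "(\<And>k. k \<in> S \<Longrightarrow> HP i (f k) y (a k)) \<Longrightarrow> HP i (\<lambda>y. \<Sum>k\<in>S. f k y) y (\<Sum>k\<in>S. a k)"
  unfolding HP_def by (rule DERIV_sum)

lemma HP_mult: "HP i f y a \<Longrightarrow> HP i h y b \<Longrightarrow> HP i (\<lambda>y. f y * h y) y (a * h y + f y * b)"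
  unfolding HP_def using DERIV_mult'[of "\<lambda>t. f (y + axis i t)" a 0 UNIV "\<lambda>t. h (y + axis i t)" b]
  by (simp add: algebra_simps)

lemma HP_coord: "HP i (\<lambda>y. y $ k) y (if k = i then 1 else 0)"
proof -
  have "((\<lambda>t. y $ k + (if k = i then t else 0)) has_field_derivative (0 + (if k = i then 1 else 0))) (at 0)"
    by (intro DERIV_add DERIV_const) (auto intro: DERIV_ident)
  then show ?thesis unfolding HP_def by (simp add: axis_def)
qed

lemma pd_local:
  fixes f h :: "complex^'n::finite \<Rightarrow> complex"
  assumes W: "open W" "y \<in> W" and eq: "\<And>x. x \<in> W \<Longrightarrow> f x = h x"
  shows "pd i f y = pd i h y"
  unfolding pd_def
proof (rule deriv_cong_ev)
  have c: "\<And>x. isCont (\<lambda>t. y + axis i t) x"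
    using cont_axis_line[of UNIV y i] by (simp add: continuous_on_eq_continuous_at)
  have o: "open {t. y + axis i t \<in> W}"
    using continuous_open_vimage[OF W(1) c] by (simp add: vimage_def)
  have "0 \<in> {t. y + axis i t \<in> W}" using W by simp
  then show "\<forall>\<^sub>F x in nhds 0. f (y + axis i x) = h (y + axis i x)"
    unfolding eventually_nhds using o eq by blast
qed simp

lemma sum_axis_coef': "(\<Sum>k\<in>UNIV. c k * (axis i (1::complex))$k) = c i"
  using sum_axis_coef[of i c] by (simp add: mult.commute)

lemma sum_delta_mult: "(\<Sum>k\<in>(UNIV::'n::finite set). (if k = i then 1 else 0) * (c k::complex)) = c i"
proof -
  have "(\<Sum>k\<in>(UNIV::'n set). (if k = i then 1 else 0) * c k) = (\<Sum>k\<in>UNIV. if k = i then c k else 0)"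
    by (rule sum.cong) auto
  then show ?thesis by simp
qed

lemma pd_zero_on:
  fixes g :: "complex^'n::finite \<Rightarrow> complex"
  assumes W: "open W" and z: "\<And>x. x \<in> W \<Longrightarrow> g x = 0" and y: "y \<in> W"
  shows "pd i g y = 0"
proof -
  have "pd i g y = pd i (\<lambda>_. 0) y" by (rule pd_local[OF W y z])
  also have "\<dots> = 0" by (rule HP_pd[OF HP_const])
  finally show ?thesis .
qed

lemma fz_alt: "fz E u v w = (\<Sum>i\<in>UNIV. u$i * (\<Sum>j\<in>UNIV. \<Sum>l\<in>UNIV. v$j * w$l * ipd [i, j, l] E 0))"
  by (simp add: fz_def sum_distrib_left mult.assoc)

lemma fz_axis1: "fz E (axis k 1) v w = (\<Sum>j\<in>UNIV. \<Sum>l\<in>UNIV. v$j * w$l * ipd [k, j, l] E 0)"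
  unfolding fz_alt by (rule sum_axis_coef)

lemma fz_exp1: "fz E u v w = (\<Sum>i\<in>UNIV. u$i * fz E (axis i 1) v w)"
  unfolding fz_axis1 by (rule fz_alt)

lemma fz_neg: "fz E (- u) v w = - fz E u v w"
  by (simp add: fz_def sum_negf)

lemma fz_diff: "fz E (u - u') v w = fz E u v w - fz E u' v w"
  by (simp add: fz_def algebra_simps sum_subtractf)

lemma fz_zero: "fz E 0 v w = 0"
  by (simp add: fz_def)

lemma fz_swap12:
  assumes S: "\<And>l i j. ipd [l, i, j] E 0 = ipd [i, l, j] E 0"
  shows "fz E u v w = fz E v u w"
proof -
  have "fz E v u w = (\<Sum>j\<in>UNIV. \<Sum>i\<in>UNIV. \<Sum>l\<in>UNIV. v$i * u$j * w$l * ipd [i, j, l] E 0)"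
    unfolding fz_def by (rule sum.swap)
  also have "\<dots> = (\<Sum>j\<in>UNIV. \<Sum>i\<in>UNIV. \<Sum>l\<in>UNIV. u$j * v$i * w$l * ipd [j, i, l] E 0)"
    by (intro sum.cong refl, subst S) (simp add: mult_ac)
  also have "\<dots> = fz E u v w" by (simp add: fz_def)
  finally show ?thesis by simp
qed





lemma sum_concat:
  fixes f g :: "nat \<Rightarrow> 'a::comm_monoid_add"
  shows "(\<Sum>l<m. f l) + (\<Sum>l<m'. g l) = (\<Sum>l<m+m'. if l < m then f l else g (l - m))"
proof -
  let ?h = "\<lambda>l. if l < m then f l else g (l - m)"
  have "(\<Sum>l\<in>{0..<m+m'}. ?h l) = (\<Sum>l\<in>{0..<m}. ?h l) + (\<Sum>l\<in>{m..<m+m'}. ?h l)"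
    by (rule sum.atLeastLessThan_concat[symmetric]) auto
  then have "(\<Sum>l<m+m'. ?h l) = (\<Sum>l\<in>{0..<m}. ?h l) + (\<Sum>l\<in>{m..<m+m'}. ?h l)"
    by (simp only: atLeast0LessThan)
  also have "(\<Sum>l\<in>{0..<m}. ?h l) = (\<Sum>l<m. f l)"
    by (simp add: atLeast0LessThan)
  also have "(\<Sum>l\<in>{m..<m+m'}. ?h l) = (\<Sum>l\<in>{0+m..<m'+m}. ?h l)" by (simp add: add.commute)
  also have "\<dots> = (\<Sum>l\<in>{0..<m'}. ?h (l + m))" by (rule sum.shift_bounds_nat_ivl)
  also have "\<dots> = (\<Sum>l<m'. g l)" by (simp add: atLeast0LessThan)
  finally show ?thesis by simp
qed

lemma DmodT_eq: "DmodT = {p. snd p = 0}"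
  unfolding DmodT_def Dz_def
proof (intro set_eqI iffI)
  fix p :: "(complex^'n::finite) \<times> complex"
  assume "p \<in> quotT ` {xi. contact_form (0, 0, 0) xi = 0}"
  then obtain xi where "p = quotT xi" "contact_form (0, 0, 0) xi = 0" by blast
  then show "p \<in> {p. snd p = 0}" by (cases xi) (auto simp: quotT_def contact_form_def cdot_def)
next
  fix p :: "(complex^'n::finite) \<times> complex"
  assume "p \<in> {p. snd p = 0}"
  then show "p \<in> quotT ` {xi. contact_form (0, 0, 0) xi = 0}"
    by (intro image_eqI[of _ _ "(0, fst p, 0)"]) (auto simp: quotT_def prod_eq_iff contact_form_def cdot_def)
qed

lemma ImII_I: "(\<Sum>l<(m::nat). II F E (v l) (w l)) \<in> ImII F E"
  unfolding ImII_def by (rule CollectI, rule exI[of _ m], rule exI[of _ v], rule exI[of _ w]) simp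

lemma ImII_E: "p \<in> ImII F E \<Longrightarrow> \<exists>(m::nat) v w. p = (\<Sum>l<m. II F E (v l) (w l))"
  unfolding ImII_def by simp

lemma II_scale: "fst (II F E (c *s v) w) = c *s fst (II F E v w)"
  by (simp add: II_def vec_eq_iff sum_distrib_left mult_ac)

lemma vec_scale_sum: "c *s (\<Sum>l\<in>A. f l) = (\<Sum>l\<in>A. c *s (f l :: complex^'n::finite))"
  by (simp add: vec_eq_iff sum_distrib_left sum_component)

lemma ImII_add: "p \<in> ImII F E \<Longrightarrow> q \<in> ImII F E \<Longrightarrow> p + q \<in> ImII F E"
proof -
  assume "p \<in> ImII F E" "q \<in> ImII F E"
  then obtain m v w m' v' w' where p: "p = (\<Sum>l<(m::nat). II F E (v l) (w l))" and q: "q = (\<Sum>l<(m'::nat). II F E (v' l) (w' l))"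
    using ImII_E by metis
  define V where "V l = (if l < m then v l else v' (l - m))" for l
  define W where "W l = (if l < m then w l else w' (l - m))" for l
  have "p + q = (\<Sum>l<m+m'. if l < m then II F E (v l) (w l) else II F E (v' (l - m)) (w' (l - m)))"
    unfolding p q by (rule sum_concat)
  also have "\<dots> = (\<Sum>l<m+m'. II F E (V l) (W l))"
    by (rule sum.cong[OF refl]) (simp add: V_def W_def)
  also have "\<dots> \<in> ImII F E" by (rule ImII_I)
  finally show ?thesis .
qed

lemma ImII_scale: "p \<in> ImII F E \<Longrightarrow> \<exists>q\<in>ImII F E. fst q = c *s fst p"
proof -
  assume "p \<in> ImII F E"
  then obtain m v w where p: "p = (\<Sum>l<(m::nat). II F E (v l) (w l))" using ImII_E by metis
  have "(\<Sum>l<m. II F E (c *s v l) (w l)) \<in> ImII F E" by (rule ImII_I)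
  moreover have "fst (\<Sum>l<m. II F E (c *s v l) (w l)) = c *s fst p"
    by (simp add: p fst_sum II_scale vec_scale_sum)
  ultimately show ?thesis by blast
qed

lemma ImII_zero: "0 \<in> ImII F E"
proof -
  have "(\<Sum>l<(0::nat). II F E ((\<lambda>_. 0) l) ((\<lambda>_. 0) l)) \<in> ImII F E" by (rule ImII_I)
  then show ?thesis by simp
qed

lemma ImII_II: "II F E v w \<in> ImII F E"
proof -
  have "(\<Sum>l<(1::nat). II F E ((\<lambda>_. v) l) ((\<lambda>_. w) l)) \<in> ImII F E" by (rule ImII_I)
  then show ?thesis by simp
qed

lemma subspace_fst_ImII: "subspace (fst ` ImII F E)"
  unfolding subspace_def
proof (intro conjI ballI allI)
  show "0 \<in> fst ` ImII F E" using ImII_zero by force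
  fix x y assume "x \<in> fst ` ImII F E" "y \<in> fst ` ImII F E"
  then obtain p q where "p \<in> ImII F E" "q \<in> ImII F E" "x = fst p" "y = fst q" by blast
  then show "x + y \<in> fst ` ImII F E" using ImII_add[of p F E q] by force
next
  fix r :: real and x assume "x \<in> fst ` ImII F E"
  then obtain p where p: "p \<in> ImII F E" "x = fst p" by blast
  obtain q where "q \<in> ImII F E" "fst q = of_real r *s fst p" using ImII_scale[OF p(1)] by blast
  moreover have "of_real r *s fst p = r *\<^sub>R x" by (simp add: p vec_eq_iff scaleR_conv_of_real[where 'a=complex])
  ultimately show "r *\<^sub>R x \<in> fst ` ImII F E" by force
qed

lemma proper_subspace_functional:
  fixes S :: "(complex^'n::finite) set"
  assumes S: "subspace S" "S \<noteq> UNIV" and iS: "\<And>x. x \<in> S \<Longrightarrow> \<i> *s x \<in> S"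
  shows "\<exists>c. c \<noteq> 0 \<and> (\<forall>x\<in>S. cdot c x = 0)"
proof -
  have "span S = S" using S(1) by simp
  then have "dim S \<noteq> DIM(complex^'n)" using S(2) dim_eq_full by metis
  then have "dim S < DIM(complex^'n)" using dim_subset_UNIV[of S] by simp
  then obtain a where a: "a \<noteq> 0" "\<And>y. y \<in> span S \<Longrightarrow> orthogonal a y"
    using orthogonal_to_subspace_exists by blast
  define c where "c = (\<chi> i. cnj (a $ i))"
  have re: "Re (cdot c x) = inner a x" for x
    by (simp add: c_def cdot_def inner_vec_def inner_complex_def Re_sum)
  have "cdot c x = 0" if x: "x \<in> S" for x
  proof -
    have "Re (cdot c x) = 0" using a(2)[of x] x \<open>span S = S\<close> by (simp add: re orthogonal_def)
    moreover have "Re (cdot c (\<i> *s x)) = 0" using a(2)[of "\<i> *s x"] iS[OF x] \<open>span S = S\<close>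
      by (simp add: re orthogonal_def)
    moreover have "cdot c (\<i> *s x) = \<i> * cdot c x"
      by (simp add: cdot_def sum_distrib_left mult_ac)
    ultimately show ?thesis by (simp add: complex_eq_iff)
  qed
  moreover have "c \<noteq> 0" using a(1) by (simp add: c_def vec_eq_iff)
  ultimately show ?thesis by blast
qed

lemma cdot_sum: "cdot c (\<Sum>l\<in>A. x l) = (\<Sum>l\<in>A. cdot c (x l))"
  unfolding cdot_def by (simp add: sum_component sum_distrib_left) (rule sum.swap)

lemma cdot_zero_left[simp]: "cdot 0 x = 0"
  by (simp add: cdot_def)

lemma cdot_zero_right[simp]: "cdot c 0 = 0"
  by (simp add: cdot_def)

lemma cdot_axis: "cdot c (axis k 1) = c $ k"
  unfolding cdot_def by (rule sum_axis_coef')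

lemma sum_delta_mult': "(\<Sum>k\<in>(UNIV::'n::finite set). (c k::complex) * (if k = i then 1 else 0)) = c i"
  using sum_delta_mult[of i c] by (simp add: mult.commute)

lemma fz_swap23:
  assumes S: "\<And>l i j. ipd [l, i, j] E 0 = ipd [l, j, i] E 0"
  shows "fz E u v w = fz E u w v"
proof -
  have "fz E u w v = (\<Sum>i\<in>UNIV. \<Sum>l\<in>UNIV. \<Sum>j\<in>UNIV. u$i * w$j * v$l * ipd [i, j, l] E 0)"
    unfolding fz_def by (rule sum.cong[OF refl], rule sum.swap)
  also have "\<dots> = (\<Sum>i\<in>UNIV. \<Sum>l\<in>UNIV. \<Sum>j\<in>UNIV. u$i * v$l * w$j * ipd [i, l, j] E 0)"
  proof -
    have h: "u$i * w$j * v$l * ipd [i, j, l] E 0 = u$i * v$l * w$j * ipd [i, l, j] E 0" for i j l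
      using S[of i j l] by (simp add: mult_ac)
    show ?thesis by (intro sum.cong refl) (rule h)
  qed
  also have "\<dots> = fz E u v w" by (simp add: fz_def)
  finally show ?thesis by simp
qed

lemma sum2_axis: "(\<Sum>i'\<in>UNIV. \<Sum>j'\<in>UNIV. (axis i 1)$i' * (axis j (1::complex))$j' * X i' j') = (X i j :: complex)"
proof -
  have "(\<Sum>i'\<in>UNIV. \<Sum>j'\<in>UNIV. (axis i 1)$i' * (axis j (1::complex))$j' * X i' j')
      = (\<Sum>i'\<in>UNIV. (axis i 1)$i' * (\<Sum>j'\<in>UNIV. (axis j (1::complex))$j' * X i' j'))"
    by (simp add: sum_distrib_left mult.assoc)
  also have "\<dots> = (\<Sum>i'\<in>UNIV. (axis i 1)$i' * X i' j)" by (simp add: sum_axis_coef)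
  also have "\<dots> = X i j" by (rule sum_axis_coef)
  finally show ?thesis .
qed

context
  fixes F :: "complex^'n::finite \<Rightarrow> complex^'n" and E :: "complex^'n \<Rightarrow> complex" and U
  assumes leg: "adapted_legendrian F E U"
begin

lemma leg_basic:
  "open U" "0 \<in> U" "cholo_on (\<lambda>y. F y $ k) U" "cholo_on E U" "F 0 = 0" "E 0 = 0"
  "pd j (\<lambda>y. F y $ k) 0 = 0" "pd j E 0 = 0"
  using leg unfolding adapted_legendrian_def by auto

lemma leg_contact:
  assumes y: "y \<in> U"
  shows "pd j E y = F y $ j - (\<Sum>k\<in>UNIV. y$k * pd j (\<lambda>y. F y $ k) y)"
proof -
  have "contact_form (y, F y, E y) (dparam F E y (axis j 1)) = 0"
    using leg y unfolding adapted_legendrian_def by blast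
  then show ?thesis
    by (simp add: contact_form_def dparam_def cdot_def sum_axis_coef sum_axis_coef')
qed

abbreviation "Fk k \<equiv> (\<lambda>y. F y $ k)"

lemma leg_second:
  assumes y: "y \<in> U"
  shows "pd i (pd j E) y = pd i (Fk j) y - pd j (Fk i) y - (\<Sum>k\<in>UNIV. y$k * pd i (pd j (Fk k)) y)"
proof -
  have "pd i (pd j E) y = pd i (\<lambda>y. F y $ j - (\<Sum>k\<in>UNIV. y$k * pd j (Fk k) y)) y"
    by (rule pd_local[OF leg_basic(1) y leg_contact])
  also have "\<dots> = pd i (Fk j) y - (\<Sum>k\<in>UNIV. (if k = i then 1 else 0) * pd j (Fk k) y + y$k * pd i (pd j (Fk k)) y)"
    by (intro HP_pd HP_diff HP_sum HP_mult HP_cholo[where U=U] HP_coord cholo_pd[where U=U] leg_basic y)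
  also have "\<dots> = pd i (Fk j) y - pd j (Fk i) y - (\<Sum>k\<in>UNIV. y$k * pd i (pd j (Fk k)) y)"
    by (simp add: sum.distrib sum_delta_mult)
  finally show ?thesis .
qed

lemma leg_symF:
  assumes y: "y \<in> U"
  shows "pd i (Fk j) y = pd j (Fk i) y"
proof -
  have "pd i (pd j E) y = pd j (pd i E) y" by (rule pd_sym[OF leg_basic(4) y])
  moreover have "pd i (pd j (Fk k)) y = pd j (pd i (Fk k)) y" for k by (rule pd_sym[OF leg_basic(3) y])
  ultimately have "pd i (Fk j) y - pd j (Fk i) y = pd j (Fk i) y - pd i (Fk j) y"
    using leg_second[OF y, of i j] leg_second[OF y, of j i] by simp
  then show ?thesis by (simp add: algebra_simps)
qed

lemma leg_second':
  assumes y: "y \<in> U"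
  shows "pd i (pd j E) y = - (\<Sum>k\<in>UNIV. y$k * pd i (pd j (Fk k)) y)"
  using leg_second[OF y, of i j] leg_symF[OF y, of i j] by simp

lemma leg_II_E: "ipd [i, j] E 0 = 0"
  using leg_second'[OF leg_basic(2), of i j] by simp

lemma leg_T_F: "ipd [l, i, j] E 0 = - ipd [i, j] (Fk l) 0"
proof -
  have "ipd [l, i, j] E 0 = pd l (\<lambda>y. - (\<Sum>k\<in>UNIV. y$k * pd i (pd j (Fk k)) y)) 0"
    by (simp, rule pd_local[OF leg_basic(1) leg_basic(2) leg_second'])
  also have "\<dots> = - (\<Sum>k\<in>UNIV. (if k = l then 1 else 0) * pd i (pd j (Fk k)) 0 + (0::complex^'n)$k * pd l (pd i (pd j (Fk k))) 0)"
    by (intro HP_pd HP_minus HP_sum HP_mult HP_cholo[where U=U] HP_coord cholo_pd[where U=U] leg_basic)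
  also have "\<dots> = - ipd [i, j] (Fk l) 0"
    by (simp add: sum_delta_mult)
  finally show ?thesis .
qed

lemma leg_T_sym12: "ipd [l, i, j] E 0 = ipd [i, l, j] E 0"
  using pd_sym[OF cholo_pd[OF leg_basic(4)] leg_basic(2), of l i j] by simp

lemma leg_T_sym23: "ipd [l, i, j] E 0 = ipd [l, j, i] E 0"
proof -
  have "pd l (pd i (pd j E)) 0 = pd l (pd j (pd i E)) 0"
    by (rule pd_local[OF leg_basic(1) leg_basic(2)]) (rule pd_sym[OF leg_basic(4)])
  then show ?thesis by simp
qed

lemma leg_T_F_pd: "pd i (pd j (Fk k)) 0 = - pd k (pd i (pd j E)) 0"
  using leg_T_F[of k i j] by simp

lemma leg_II_E_pd: "pd i (pd j E) 0 = 0"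
  using leg_II_E[of i j] by simp

lemma leg_II: "II F E v w = (\<chi> k. - fz E (axis k 1) v w, 0)"
  by (simp add: II_def fz_axis1 vec_eq_iff leg_T_F_pd sum_negf leg_II_E_pd)

lemma leg_cdot_II: "cdot c (fst (II F E v w)) = - fz E c v w"
  by (simp add: leg_II cdot_def sum_negf fz_exp1[of E c v w])

lemma leg_swap12: "fz E u v w = fz E v u w"
  by (rule fz_swap12) (rule leg_T_sym12)

lemma leg_swap23: "fz E u v w = fz E u w v"
  by (rule fz_swap23) (rule leg_T_sym23)

lemma leg_null_iff: "(\<forall>w. II F E v w = 0) \<longleftrightarrow> (\<forall>a b. fz E v a b = 0)"
proof
  assume A: "\<forall>w. II F E v w = 0"
  have z: "fz E (axis k 1) v w = 0" for k w
  proof -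
    have "fst (II F E v w) $ k = 0" using A by simp
    then show ?thesis by (simp add: leg_II)
  qed
  show "\<forall>a b. fz E v a b = 0"
  proof (intro allI)
    fix a b
    have "fz E v a b = fz E a v b" by (rule leg_swap12)
    also have "\<dots> = (\<Sum>i\<in>UNIV. a$i * fz E (axis i 1) v b)" by (rule fz_exp1)
    also have "\<dots> = 0" by (simp add: z)
    finally show "fz E v a b = 0" .
  qed
next
  assume A: "\<forall>a b. fz E v a b = 0"
  show "\<forall>w. II F E v w = 0"
  proof
    fix w
    have "fz E (axis k 1) v w = 0" for k using A leg_swap12[of "axis k 1" v w] by simp
    then show "II F E v w = 0" by (simp add: leg_II vec_eq_iff zero_prod_def)
  qed
qed

lemma leg_ImII_sub: "ImII F E \<subseteq> DmodT"
proof
  fix p assume "p \<in> ImII F E"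
  then obtain m v w where p: "p = (\<Sum>l<(m::nat). II F E (v l) (w l))" using ImII_E by metis
  then have "snd p = 0" by (simp add: snd_sum leg_II)
  then show "p \<in> DmodT" by (simp add: DmodT_eq)
qed

lemma leg_b: "ImII F E = DmodT \<longleftrightarrow> (\<forall>v. (\<forall>w. II F E v w = 0) \<longrightarrow> v = 0)"
proof
  assume eq: "ImII F E = DmodT"
  show "\<forall>v. (\<forall>w. II F E v w = 0) \<longrightarrow> v = 0"
  proof (intro allI impI)
    fix v assume nv: "\<forall>w. II F E v w = 0"
    show "v = 0"
    proof (rule ccontr)
      assume "v \<noteq> 0"
      then obtain k where k: "v $ k \<noteq> 0" by (auto simp: vec_eq_iff)
      have "(axis k 1, 0) \<in> ImII F E" using eq by (simp add: DmodT_eq)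
      then obtain m V W where mvw: "(axis k 1, 0) = (\<Sum>l<(m::nat). II F E (V l) (W l))" using ImII_E by metis
      have "cdot v (axis k 1) = cdot v (fst (\<Sum>l<m. II F E (V l) (W l)))" using mvw by (metis fst_conv)
      also have "\<dots> = (\<Sum>l<m. - fz E v (V l) (W l))" by (simp add: fst_sum cdot_sum leg_cdot_II)
      also have "\<dots> = 0" using nv leg_null_iff by simp
      finally show False using k by (simp add: cdot_axis)
    qed
  qed
next
  assume nd: "\<forall>v. (\<forall>w. II F E v w = 0) \<longrightarrow> v = 0"
  have full: "fst ` ImII F E = UNIV"
  proof (rule ccontr)
    assume ne: "fst ` ImII F E \<noteq> UNIV"
    have iS: "\<i> *s x \<in> fst ` ImII F E" if "x \<in> fst ` ImII F E" for x
      using that ImII_scale[of _ F E \<i>] by force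
    obtain c where c: "c \<noteq> 0" "\<forall>x\<in>fst ` ImII F E. cdot c x = 0"
      using proper_subspace_functional[OF subspace_fst_ImII ne iS] by blast
    have "fz E c a b = 0" for a b
    proof -
      have "fst (II F E a b) \<in> fst ` ImII F E" using ImII_II by blast
      then have "cdot c (fst (II F E a b)) = 0" using c(2) by blast
      then show ?thesis by (simp add: leg_cdot_II)
    qed
    then have "c = 0" using nd leg_null_iff by blast
    then show False using c(1) by simp
  qed
  show "ImII F E = DmodT"
  proof
    show "ImII F E \<subseteq> DmodT" by (rule leg_ImII_sub)
    show "DmodT \<subseteq> ImII F E"
    proof
      fix p :: "(complex^'n) \<times> complex" assume p: "p \<in> DmodT"
      obtain q where q: "q \<in> ImII F E" "fst q = fst p" using full by (metis UNIV_I imageE)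
      have "q \<in> DmodT" using leg_ImII_sub q(1) by blast
      then have "snd q = snd p" using p by (simp add: DmodT_eq)
      then have "q = p" using q(2) by (simp add: prod_eq_iff)
      then show "p \<in> ImII F E" using q(1) by simp
    qed
  qed
qed

lemma leg_inj:
  assumes eq: "ImII F E = DmodT"
  shows "inj (\<lambda>v w1 w2. fz E v w1 w2)"
proof (rule injI)
  fix x y assume xy: "(\<lambda>w1 w2. fz E x w1 w2) = (\<lambda>w1 w2. fz E y w1 w2)"
  have "fz E (x - y) a b = 0" for a b
    using fun_cong[OF fun_cong[OF xy, of a], of b] by (simp add: fz_diff)
  then have "\<forall>w. II F E (x - y) w = 0" using leg_null_iff by blast
  then have "x - y = 0" using eq leg_b by blast
  then show "x = y" by simp
qed

lemma leg_d: "{(\<lambda>w1 w2. nfun c c0 (II F E w1 w2)) | c c0. True} = {(\<lambda>w1 w2. fz E v w1 w2) | v. True}"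
proof -
  have nf: "nfun c c0 (II F E w1 w2) = fz E (- c) w1 w2" for c c0 w1 w2
    using leg_cdot_II[of c w1 w2] by (simp add: nfun_def fz_neg leg_II[of w1 w2])
  show ?thesis
  proof (intro set_eqI iffI)
    fix f assume "f \<in> {(\<lambda>w1 w2. nfun c c0 (II F E w1 w2)) | c c0. True}"
    then obtain c c0 where "f = (\<lambda>w1 w2. nfun c c0 (II F E w1 w2))" by blast
    then have "f = (\<lambda>w1 w2. fz E (- c) w1 w2)" by (simp add: nf)
    then show "f \<in> {(\<lambda>w1 w2. fz E v w1 w2) | v. True}" by blast
  next
    fix f assume "f \<in> {(\<lambda>w1 w2. fz E v w1 w2) | v. True}"
    then obtain v where "f = (\<lambda>w1 w2. fz E v w1 w2)" by blast
    then have "f = (\<lambda>w1 w2. nfun (- v) 0 (II F E w1 w2))" by (simp add: nf)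
    then show "f \<in> {(\<lambda>w1 w2. nfun c c0 (II F E w1 w2)) | c c0. True}" by blast
  qed
qed

lemma leg_c:
  assumes eq: "ImII F E = DmodT"
  shows "\<exists>c c0. (c, c0) \<noteq> 0 \<and> (\<forall>p. nfun c c0 p = 0 \<longleftrightarrow> p \<in> ImII F E)
                 \<and> (\<forall>u v w. nfun c c0 (III F E u v w) = fz E u v w)"
proof (intro exI conjI allI)
  show "((0::complex^'n), (1::complex)) \<noteq> 0" by (simp add: zero_prod_def)
  fix p :: "(complex^'n) \<times> complex"
  show "nfun 0 1 p = 0 \<longleftrightarrow> p \<in> ImII F E" by (simp add: eq DmodT_eq nfun_def)
next
  fix u v w :: "complex^'n"
  show "nfun 0 1 (III F E u v w) = fz E u v w" by (simp add: nfun_def III_def fz_def)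
qed

lemma leg_e:
  assumes eq: "ImII F E = DmodT"
  shows "\<forall>a0 a b c W. open W \<and> 0 \<in> W \<and> W \<subseteq> U \<and>
              (\<forall>y\<in>W. a0 + cdot a y + cdot b (F y) + c * E y = 0)
              \<longrightarrow> a0 = 0 \<and> a = 0 \<and> b = 0 \<and> c = 0"
proof (intro allI impI)
  fix a0 c :: complex and a b :: "complex^'n" and W
  assume H: "open W \<and> 0 \<in> W \<and> W \<subseteq> U \<and> (\<forall>y\<in>W. a0 + cdot a y + cdot b (F y) + c * E y = 0)"
  then have W: "open W" "0 \<in> W" "W \<subseteq> U"
    and Z: "\<And>y. y \<in> W \<Longrightarrow> a0 + cdot a y + cdot b (F y) + c * E y = 0" by auto
  have inj: "inj (\<lambda>v w1 w2. fz E v w1 w2)" by (rule leg_inj[OF eq])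
  define \<Phi> where "\<Phi> y = a0 + cdot a y + cdot b (F y) + c * E y" for y
  have a0: "a0 = 0" using Z[OF W(2)] leg_basic(5,6) by simp
  have \<Phi>0: "\<Phi> y = 0" if "y \<in> W" for y using Z that by (simp add: \<Phi>_def)
  have d1: "pd j \<Phi> y = a$j + (\<Sum>k\<in>UNIV. b$k * pd j (Fk k) y) + c * pd j E y" if y: "y \<in> U" for j y
  proof -
    have "HP j \<Phi> y (0 + (\<Sum>k\<in>UNIV. a$k * (if k = j then 1 else 0)) + (\<Sum>k\<in>UNIV. b$k * pd j (Fk k) y) + c * pd j E y)"
      unfolding \<Phi>_def cdot_def
      by (intro HP_add HP_const HP_sum HP_cmult HP_coord HP_cholo[where U=U] leg_basic y)
    then show ?thesis by (simp add: HP_pd sum_delta_mult')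
  qed
  have z1: "pd j \<Phi> y = 0" if "y \<in> W" for j y by (rule pd_zero_on[OF W(1) \<Phi>0 that])
  have a: "a = 0"
  proof -
    have "a$j = 0" for j using d1[OF leg_basic(2), of j] z1[OF W(2), of j] by (simp add: leg_basic)
    then show ?thesis by (simp add: vec_eq_iff)
  qed
  have d2: "pd i (pd j \<Phi>) 0 = (\<Sum>k\<in>UNIV. b$k * pd i (pd j (Fk k)) 0) + c * pd i (pd j E) 0" for i j
  proof -
    have "pd i (pd j \<Phi>) 0 = pd i (\<lambda>y. a$j + (\<Sum>k\<in>UNIV. b$k * pd j (Fk k) y) + c * pd j E y) 0"
      by (rule pd_local[OF leg_basic(1) leg_basic(2) d1])
    also have "\<dots> = 0 + (\<Sum>k\<in>UNIV. b$k * pd i (pd j (Fk k)) 0) + c * pd i (pd j E) 0"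
      by (intro HP_pd HP_add HP_const HP_sum HP_cmult HP_cholo[where U=U] cholo_pd[where U=U] leg_basic)
    finally show ?thesis by simp
  qed
  have z2: "pd i (pd j \<Phi>) 0 = 0" for i j by (rule pd_zero_on[OF W(1) z1 W(2)])
  have bz: "fz E b (axis i 1) (axis j 1) = 0" for i j
  proof -
    have s0: "(\<Sum>k\<in>UNIV. b$k * pd i (pd j (Fk k)) 0) = 0" using d2[of i j] z2[of i j] by (simp add: leg_II_E_pd)
    have "- fz E b (axis i 1) (axis j 1) = cdot b (fst (II F E (axis i 1) (axis j 1)))"
      by (simp add: leg_cdot_II)
    also have "\<dots> = (\<Sum>k\<in>UNIV. b$k * pd i (pd j (Fk k)) 0)"
      unfolding cdot_def II_def by (simp add: sum2_axis[where X="\<lambda>i j. ipd [i, j] (Fk _) 0", simplified])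
    finally show ?thesis using s0 by simp
  qed
  have bz3: "fz E b (axis i 1) w = 0" for i w
  proof -
    have "fz E b (axis i 1) w = fz E w b (axis i 1)" using leg_swap23 leg_swap12 by metis
    also have "\<dots> = (\<Sum>j\<in>UNIV. w$j * fz E (axis j 1) b (axis i 1))" by (rule fz_exp1)
    also have "\<dots> = (\<Sum>j\<in>UNIV. w$j * fz E b (axis j 1) (axis i 1))" using leg_swap12 by metis
    also have "\<dots> = 0" by (simp add: bz)
    finally show ?thesis .
  qed
  have bz2: "fz E b v w = 0" for v w
  proof -
    have "fz E b v w = fz E v b w" by (rule leg_swap12)
    also have "\<dots> = (\<Sum>i\<in>UNIV. v$i * fz E (axis i 1) b w)" by (rule fz_exp1)
    also have "\<dots> = (\<Sum>i\<in>UNIV. v$i * fz E b (axis i 1) w)" using leg_swap12 by metis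
    also have "\<dots> = 0" by (simp add: bz3)
    finally show ?thesis .
  qed
  have b: "b = 0"
  proof -
    have "(\<lambda>w1 w2. fz E b w1 w2) = (\<lambda>w1 w2. fz E 0 w1 w2)" by (simp add: bz2 fz_zero)
    then show ?thesis using inj by (meson injD)
  qed
  have c: "c = 0"
  proof (rule ccontr)
    assume c: "c \<noteq> 0"
    have E0: "E y = 0" if "y \<in> W" for y using Z[OF that] a0 a b c by simp
    have E1: "pd j E y = 0" if "y \<in> W" for j y by (rule pd_zero_on[OF W(1) E0 that])
    have E2: "pd i (pd j E) y = 0" if "y \<in> W" for i j y by (rule pd_zero_on[OF W(1) E1 that])
    have E3: "pd l (pd i (pd j E)) 0 = 0" for l i j by (rule pd_zero_on[OF W(1) E2 W(2)])
    have fz0: "fz E u v w = 0" for u v w by (simp add: fz_def E3)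
    obtain k :: 'n where True by simp
    have "(\<lambda>w1 w2. fz E (axis k 1) w1 w2) = (\<lambda>w1 w2. fz E 0 w1 w2)" by (simp add: fz0)
    then have "axis k (1::complex) = 0" using inj by (meson injD)
    then show False by simp
  qed
  show "a0 = 0 \<and> a = 0 \<and> b = 0 \<and> c = 0" using a0 a b c by simp
qed

end


theorem proposition2p4:
  fixes F :: "complex^'n::finite \<Rightarrow> complex^'n"
    and E :: "complex^'n \<Rightarrow> complex"
    and U :: "(complex^'n) set"
  assumes "adapted_legendrian F E U"
  shows "ImII F E \<subseteq> DmodT
    \<and> (ImII F E = DmodT \<longleftrightarrow> (\<forall>v. (\<forall>w. II F E v w = 0) \<longrightarrow> v = 0))
    \<and> (ImII F E = DmodT \<longrightarrow>
         (\<exists>c c0. (c, c0) \<noteq> 0 \<and> (\<forall>p. nfun c c0 p = 0 \<longleftrightarrow> p \<in> ImII F E)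
                 \<and> (\<forall>u v w. nfun c c0 (III F E u v w) = fz E u v w))
       \<and> {(\<lambda>w1 w2. nfun c c0 (II F E w1 w2)) | c c0. True} = {(\<lambda>w1 w2. fz E v w1 w2) | v. True}
       \<and> inj (\<lambda>v w1 w2. fz E v w1 w2)
       \<and> (\<forall>a0 a b c W. open W \<and> 0 \<in> W \<and> W \<subseteq> U \<and>
              (\<forall>y\<in>W. a0 + cdot a y + cdot b (F y) + c * E y = 0)
              \<longrightarrow> a0 = 0 \<and> a = 0 \<and> b = 0 \<and> c = 0))"
proof (intro conjI impI)
  show "ImII F E \<subseteq> DmodT" by (rule leg_ImII_sub[OF assms])
  show "ImII F E = DmodT \<longleftrightarrow> (\<forall>v. (\<forall>w. II F E v w = 0) \<longrightarrow> v = 0)" by (rule leg_b[OF assms])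
  assume eq: "ImII F E = DmodT"
  show "\<exists>c c0. (c, c0) \<noteq> 0 \<and> (\<forall>p. nfun c c0 p = 0 \<longleftrightarrow> p \<in> ImII F E)
                 \<and> (\<forall>u v w. nfun c c0 (III F E u v w) = fz E u v w)" by (rule leg_c[OF assms eq])
  show "{(\<lambda>w1 w2. nfun c c0 (II F E w1 w2)) | c c0. True} = {(\<lambda>w1 w2. fz E v w1 w2) | v. True}"
    by (rule leg_d[OF assms])
  show "inj (\<lambda>v w1 w2. fz E v w1 w2)" by (rule leg_inj[OF assms eq])
  show "\<forall>a0 a b c W. open W \<and> 0 \<in> W \<and> W \<subseteq> U \<and>
              (\<forall>y\<in>W. a0 + cdot a y + cdot b (F y) + c * E y = 0)
              \<longrightarrow> a0 = 0 \<and> a = 0 \<and> b = 0 \<and> c = 0" by (rule leg_e[OF assms eq])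
qed

end
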